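(* Let $p\in(0,1)$, $\gamma>0$, $B>0$, $w,N\in\mathbb{N}$, and let $(\xi_j^{(N)*})_{j=1}^N$ be the unique maximizer of $\mathcal{T}_N$. Then $\xi_j^{(N)*}>0$ for all $j\in\{1,\dots,N\}$ and $\xi_1^{(N)*}>\xi_2^{(N)*}>\dots>\xi_N^{(N)*}$.
   Context: Logarithms are base 2. For an admissible (nonnegative, with sum at most $B$) sequence $(x_j)_{j\ge1}$, $$\mathcal{T}_\infty(x_1,x_2,\dots)=\sum_{k=1}^{w}p^2(1-p)^{k-1}\frac{k}{2}\log_2\!\Big(1+\gamma\frac{B}{k}\Big)+\sum_{j=1}^{\infty}p(1-p)^{j+w-1}\frac12\log_2(1+\gamma x_j)+\sum_{k=1}^{\infty}p^2(1-p)^{k+w-1}\frac{w}{2}\log_2\!\Big(1+\gamma\frac{B-\sum_{j=1}^{k}x_j}{w}\Big).$$ For $N\in\mathbb{N}$ and $\xi_1,\dots,\xi_N\ge0$ with $\sum_{j=1}^N\xi_j\le B$, define $\mathcal{T}_N(\xi_1,\dots,\xi_N)=\mathcal{T}_\infty(\xi_1,\dots,\xi_N,0,0,\dots)$. $\mathcal{T}_N$ has a unique maximizer over this compact set, denoted $(\xi_j^{(N)*})_{j=1}^N$. *)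

theory Defs
  imports "HOL-Analysis.Analysis"
begin

text \<open>Sequences are functions nat => real indexed from 1 (value at 0 is ignored).
  T_inf p g B w x is the objective \<T>_\<infinity>(x_1, x_2, ...), with logarithms base 2.
  The infinite sums are written with index i = j - 1 (resp. i = k - 1).\<close>

definition T_inf :: "real \<Rightarrow> real \<Rightarrow> real \<Rightarrow> nat \<Rightarrow> (nat \<Rightarrow> real) \<Rightarrow> real" where
  "T_inf p g B w x =
     (\<Sum>k=1..w. p^2 * (1-p)^(k-1) * (real k / 2) * log 2 (1 + g * (B / real k)))
   + (\<Sum>i. p * (1-p)^(i+w) * (1/2) * log 2 (1 + g * x (i+1)))
   + (\<Sum>i. p^2 * (1-p)^(i+w) * (real w / 2)
           * log 2 (1 + g * ((B - (\<Sum>j=1..i+1. x j)) / real w)))"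

definition T_N :: "real \<Rightarrow> real \<Rightarrow> real \<Rightarrow> nat \<Rightarrow> nat \<Rightarrow> (nat \<Rightarrow> real) \<Rightarrow> real" where
  "T_N p g B w N xi = T_inf p g B w (\<lambda>j. if 1 \<le> j \<and> j \<le> N then xi j else 0)"

definition feasible_N :: "real \<Rightarrow> nat \<Rightarrow> (nat \<Rightarrow> real) \<Rightarrow> bool" where
  "feasible_N B N xi \<longleftrightarrow> (\<forall>j\<in>{1..N}. 0 \<le> xi j) \<and> (\<Sum>j=1..N. xi j) \<le> B"

definition is_maximizer_N :: "real \<Rightarrow> real \<Rightarrow> real \<Rightarrow> nat \<Rightarrow> nat \<Rightarrow> (nat \<Rightarrow> real) \<Rightarrow> bool" where
  "is_maximizer_N p g B w N xi \<longleftrightarrow> feasible_N B N xi \<and>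
     (\<forall>eta. feasible_N B N eta \<longrightarrow> T_N p g B w N eta \<le> T_N p g B w N xi)"

end

theory Submission
  imports Defs
begin

definition Sx :: "(nat \<Rightarrow> real) \<Rightarrow> nat \<Rightarrow> real" where
  "Sx x k = (\<Sum>j=1..k. x j)"

definition G :: "real \<Rightarrow> real \<Rightarrow> real \<Rightarrow> nat \<Rightarrow> nat \<Rightarrow> (nat \<Rightarrow> real) \<Rightarrow> real" where
  "G p g B w N x =
     (\<Sum>i<N. p*(1-p)^(i+w)*(1/2)*log 2 (1+g*x(i+1)))
   + (\<Sum>i<N-1. p^2*(1-p)^(i+w)*(real w/2)*log 2 (1+g*((B - Sx x (i+1))/real w)))
   + p*(1-p)^(N-1+w)*(real w/2)*log 2 (1+g*((B - Sx x N)/real w))"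

lemma Sx_trunc:
  "(\<Sum>j=1..k. (if 1 \<le> j \<and> j \<le> N then xi j else 0)) = Sx xi (min k N)"
proof -
  have "(\<Sum>j=1..k. (if 1 \<le> j \<and> j \<le> N then xi j else 0)) = (\<Sum>j\<in>{1..k} \<inter> {j. j \<le> N}. xi j)"
    by (simp add: sum.inter_restrict)
  also have "{1..k} \<inter> {j. j \<le> N} = {1..min k N}" by auto
  finally show ?thesis by (simp add: Sx_def)
qed

lemma T_N_eq:
  assumes "0 < p" "p < 1" "1 \<le> N"
  shows "T_N p g B w N xi = (\<Sum>k=1..w. p^2 * (1-p)^(k-1) * (real k / 2) * log 2 (1 + g * (B / real k)))
          + G p g B w N xi"
proof -
  define x' where "x' = (\<lambda>j. if 1 \<le> j \<and> j \<le> N then xi j else 0)"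
  have s1: "(\<Sum>i. p * (1-p)^(i+w) * (1/2) * log 2 (1 + g * x' (i+1)))
        = (\<Sum>i<N. p*(1-p)^(i+w)*(1/2)*log 2 (1+g*xi(i+1)))"
  proof -
    have "(\<Sum>i. p * (1-p)^(i+w) * (1/2) * log 2 (1 + g * x' (i+1)))
       = (\<Sum>i<N. p * (1-p)^(i+w) * (1/2) * log 2 (1 + g * x' (i+1)))"
      by (rule suminf_finite) (auto simp: x'_def)
    also have "\<dots> = (\<Sum>i<N. p*(1-p)^(i+w)*(1/2)*log 2 (1+g*xi(i+1)))"
      by (rule sum.cong) (auto simp: x'_def)
    finally show ?thesis .
  qed
  define f where "f = (\<lambda>i. p^2 * (1-p)^(i+w) * (real w / 2)
           * log 2 (1 + g * ((B - (\<Sum>j=1..i+1. x' j)) / real w)))"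
  define L where "L = log 2 (1+g*((B - Sx xi N)/real w))"
  have fsh: "f (i + (N-1)) = (p^2*(1-p)^(N-1+w)*(real w/2)*L) * (1-p)^i" for i
  proof -
    have "min (i + (N-1) + 1) N = N" using assms by auto
    then show ?thesis unfolding f_def L_def x'_def Sx_trunc
      by (simp add: power_add algebra_simps)
  qed
  have "(\<lambda>i. (1-p)^i) sums (1/(1-(1-p)))"
    by (rule geometric_sums) (use assms in auto)
  then have "(\<lambda>i. (p^2*(1-p)^(N-1+w)*(real w/2)*L) * (1-p)^i) sums ((p^2*(1-p)^(N-1+w)*(real w/2)*L) * (1/(1-(1-p))))"
    by (rule sums_mult)
  moreover have "(p^2*(1-p)^(N-1+w)*(real w/2)*L) * (1/(1-(1-p))) = p*(1-p)^(N-1+w)*(real w/2)*L"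
    using assms by (simp add: power2_eq_square)
  ultimately have "(\<lambda>i. (p^2*(1-p)^(N-1+w)*(real w/2)*L) * (1-p)^i) sums (p*(1-p)^(N-1+w)*(real w/2)*L)"
    by metis
  moreover have "(\<lambda>i. f (i + (N-1))) = (\<lambda>i. (p^2*(1-p)^(N-1+w)*(real w/2)*L) * (1-p)^i)"
    using fsh by auto
  ultimately have "(\<lambda>i. f (i + (N-1))) sums (p*(1-p)^(N-1+w)*(real w/2)*L)"
    by simp
  then have "f sums (p*(1-p)^(N-1+w)*(real w/2)*L + (\<Sum>i<N-1. f i))"
    by (simp add: sums_iff_shift)
  moreover have "(\<Sum>i<N-1. f i) = (\<Sum>i<N-1. p^2*(1-p)^(i+w)*(real w/2)*log 2 (1+g*((B - Sx xi (i+1))/real w)))"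
  proof (rule sum.cong)
    fix i assume "i \<in> {..<N-1}"
    then have "min (i+1) N = i+1" by auto
    then show "f i = p^2*(1-p)^(i+w)*(real w/2)*log 2 (1+g*((B - Sx xi (i+1))/real w))"
      unfolding f_def x'_def Sx_trunc by simp
  qed simp
  ultimately have s2: "suminf f = (\<Sum>i<N-1. p^2*(1-p)^(i+w)*(real w/2)*log 2 (1+g*((B - Sx xi (i+1))/real w)))
        + p*(1-p)^(N-1+w)*(real w/2)*L"
    by (simp add: sums_iff)
  show ?thesis
    unfolding T_N_def T_inf_def G_def x'_def[symmetric] s1 f_def[symmetric] s2 L_def
    by simp
qed

lemma Sx_upd: "1 \<le> m \<Longrightarrow> Sx (x(m := x m + t)) k = Sx x k + (if m \<le> k then t else 0)"
proof -
  assume m: "1 \<le> m"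
  have "Sx (x(m := x m + t)) k = (\<Sum>j=1..k. x j + (if j = m then t else 0))"
    unfolding Sx_def by (rule sum.cong) auto
  also have "\<dots> = Sx x k + (if m \<le> k then t else 0)"
    using m by (simp add: sum.distrib Sx_def)
  finally show ?thesis .
qed

lemma Sx_mono: "(\<forall>j\<in>{1..N}. 0 \<le> x j) \<Longrightarrow> k \<le> N \<Longrightarrow> Sx x k \<le> Sx x N"
  unfolding Sx_def by (rule sum_mono2) auto

lemma dlog: "0 < a \<Longrightarrow> ((\<lambda>t. c * log 2 (a + b*t)) has_real_derivative c*b/(a*ln 2)) (at 0)"
  by (rule derivative_eq_intros refl | simp add: mult_ac)+

lemma G_deriv:
  assumes "0 < p" "p < 1" "0 < g" "1 \<le> w" "1 \<le> m" "m \<le> N"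
    and nn: "\<forall>j\<in>{1..N}. 0 \<le> x j" and sb: "Sx x N \<le> B"
  shows "((\<lambda>t. G p g B w N (x(m := x m + t))) has_real_derivative
     g/(2*ln 2) * (p*(1-p)^(m-1+w) * (1/(1+g*x m))
        - ((\<Sum>i<N-1. if m \<le> i+1 then p^2*(1-p)^(i+w) * (1/(1+g*((B - Sx x (i+1))/real w))) else 0)
           + p*(1-p)^(N-1+w) * (1/(1+g*((B - Sx x N)/real w)))))) (at 0)"
proof -
  define d1 where "d1 = (\<lambda>i::nat. if i+1 = m then 1 else (0::real))"
  define d2 where "d2 = (\<lambda>i::nat. if m \<le> i+1 then 1 else (0::real))"
  define c1 where "c1 = (\<lambda>i::nat. p*(1-p)^(i+w)*(1/2))"
  define a1 where "a1 = (\<lambda>i::nat. 1+g*x(i+1))"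
  define b1 where "b1 = (\<lambda>i::nat. g*d1 i)"
  define c2 where "c2 = (\<lambda>i::nat. p^2*(1-p)^(i+w)*(real w/2))"
  define a2 where "a2 = (\<lambda>i::nat. 1+g*((B - Sx x (i+1))/real w))"
  define b2 where "b2 = (\<lambda>i::nat. -(g*d2 i/real w))"
  define c3 where "c3 = p*(1-p)^(N-1+w)*(real w/2)"
  define a3 where "a3 = 1+g*((B - Sx x N)/real w)"
  define b3 where "b3 = -(g/real w)"
  have eq: "G p g B w N (x(m := x m + t)) =
     (\<Sum>i<N. c1 i * log 2 (a1 i + b1 i * t))
   + (\<Sum>i<N-1. c2 i * log 2 (a2 i + b2 i * t))
   + c3 * log 2 (a3 + b3 * t)" for t
    unfolding G_def Sx_upd[OF assms(5)] d1_def d2_def a1_def b1_def c1_def a2_def b2_def c2_def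
      a3_def b3_def c3_def using assms(6)
    by (intro arg_cong2[where f="(+)"] sum.cong refl) (auto simp: algebra_simps diff_divide_distrib add_divide_distrib)
  have w0: "real w > 0" using assms by simp
  have pa1: "0 < a1 i" if "i < N" for i
  proof -
    have "0 \<le> x (i+1)" using nn that by auto
    then show ?thesis unfolding a1_def using assms by (simp add: add_pos_nonneg)
  qed
  have pa2: "0 < a2 i" if "i < N" for i
  proof -
    have "Sx x (i+1) \<le> B" using Sx_mono[OF nn, of "i+1"] sb that by simp
    then show ?thesis unfolding a2_def using assms w0 by (simp add: add_pos_nonneg)
  qed
  have pa3: "0 < a3" unfolding a3_def using assms w0 sb by (simp add: add_pos_nonneg)
  have D: "((\<lambda>t. G p g B w N (x(m := x m + t))) has_real_derivative
     (\<Sum>i<N. c1 i * b1 i / (a1 i * ln 2)) + (\<Sum>i<N-1. c2 i * b2 i / (a2 i * ln 2)) + c3*b3/(a3*ln 2)) (at 0)"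
    unfolding eq
    by (intro DERIV_add DERIV_sum dlog pa1 pa2 pa3) auto
  have e1: "(\<Sum>i<N. c1 i * b1 i / (a1 i * ln 2)) = g/(2*ln 2) * (p*(1-p)^(m-1+w) * (1/(1+g*x m)))"
  proof -
    have "(\<Sum>i<N. c1 i * b1 i / (a1 i * ln 2)) = (\<Sum>i<N. if i = m-1 then c1 i * g / (a1 i * ln 2) else 0)"
      unfolding b1_def d1_def using assms(5) by (intro sum.cong) auto
    also have "\<dots> = c1 (m-1) * g / (a1 (m-1) * ln 2)" using assms(5,6) by simp
    finally show ?thesis unfolding c1_def a1_def using assms(5) by (simp add: mult_ac)
  qed
  have e2: "(\<Sum>i<N-1. c2 i * b2 i / (a2 i * ln 2)) = - (g/(2*ln 2) *
     (\<Sum>i<N-1. if m \<le> i+1 then p^2*(1-p)^(i+w) * (1/(1+g*((B - Sx x (i+1))/real w))) else 0))"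
    unfolding sum_distrib_left sum_negf[symmetric]
    unfolding c2_def b2_def d2_def a2_def using w0
    by (intro sum.cong) (auto simp: mult_ac)
  have e3: "c3*b3/(a3*ln 2) = - (g/(2*ln 2) * (p*(1-p)^(N-1+w) * (1/(1+g*((B - Sx x N)/real w)))))"
    unfolding c3_def b3_def a3_def using w0 by (simp add: mult_ac)
  show ?thesis using D unfolding e1 e2 e3 by (simp add: algebra_simps)
qed


lemma telesc:
  fixes p :: real
  assumes "0 < p" "p < 1" "1 \<le> m" "m - 1 \<le> n"
  shows "(\<Sum>i<n. if m \<le> i+1 then p^2*(1-p)^(i+w) else 0) + p*(1-p)^(n+w) = p*(1-p)^(m-1+w)"
  using assms(4)
proof (induction n rule: dec_induct)
  case base
  have "(\<Sum>i<m-1. if m \<le> i+1 then p^2*(1-p)^(i+w) else 0) = 0"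
    by (intro sum.neutral) auto
  then show ?case by simp
next
  case (step n)
  have "(\<Sum>i<Suc n. if m \<le> i+1 then p^2*(1-p)^(i+w) else 0)
     = (\<Sum>i<n. if m \<le> i+1 then p^2*(1-p)^(i+w) else 0) + p^2*(1-p)^(n+w)"
  proof -
    have "m \<le> Suc n" using step.hyps assms(3) by linarith
    then show ?thesis by simp
  qed
  moreover have "p^2*(1-p)^(n+w) + p*(1-p)^(Suc n+w) = p*(1-p)^(n+w)"
  proof -
    have gen: "p^2*K + p*((1-p)*K) = p*K" for K :: real
      by (simp add: power2_eq_square algebra_simps)
    show ?thesis using gen[of "(1-p)^(n+w)"] by simp
  qed
  ultimately show ?case using step.IH by simp
qed

lemma max_G:
  assumes "0 < p" "p < 1" "1 \<le> N" and mx: "is_maximizer_N p g B w N xi"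
    and "feasible_N B N eta"
  shows "G p g B w N eta \<le> G p g B w N xi"
  using mx assms(5) unfolding is_maximizer_N_def T_N_eq[OF assms(1-3)] by auto

lemma feas_Sx: "feasible_N B N x \<longleftrightarrow> (\<forall>j\<in>{1..N}. 0 \<le> x j) \<and> Sx x N \<le> B"
  unfolding feasible_N_def Sx_def by simp

theorem lemma5:
  fixes p g B :: real and w N :: nat and xi :: "nat \<Rightarrow> real"
  assumes "0 < p" "p < 1" "0 < g" "0 < B" "1 \<le> w" "1 \<le> N"
    and "is_maximizer_N p g B w N xi"
  shows "(\<forall>j\<in>{1..N}. 0 < xi j) \<and> (\<forall>j. 1 \<le> j \<and> j < N \<longrightarrow> xi (j+1) < xi j)"
proof -
  note a = assms
  have fx: "feasible_N B N xi" using a(7) unfolding is_maximizer_N_def by simp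
  then have nn: "\<forall>j\<in>{1..N}. 0 \<le> xi j" and sb: "Sx xi N \<le> B" by (auto simp: feas_Sx)
  have w0: "real w > 0" using a by simp
  define q where "q = 1 - p"
  have q0: "0 < q" "q < 1" using a unfolding q_def by auto
  define u where "u = (\<lambda>j. 1/(1+g*xi j))"
  define v where "v = (\<lambda>k. 1/(1+g*((B - Sx xi k)/real w)))"
  define R where "R = (\<lambda>m. (\<Sum>i<N-1. if m \<le> i+1 then p^2*q^(i+w) * v (i+1) else 0) + p*q^(N-1+w) * v N)"
  have der: "((\<lambda>t. G p g B w N (xi(m := xi m + t))) has_real_derivative
     g/(2*ln 2) * (p*q^(m-1+w) * u m - R m)) (at 0)" if "1 \<le> m" "m \<le> N" for m
    using G_deriv[OF a(1,2,3,5) that nn sb] unfolding u_def v_def R_def q_def .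
  have cpos: "g/(2*ln 2) > 0" using a by simp
  have opt1: "p*q^(m-1+w) * u m \<le> R m" if "1 \<le> m" "m \<le> N" "Sx xi N < B" for m
  proof (rule ccontr)
    assume "\<not> ?thesis"
    then have "g/(2*ln 2) * (p*q^(m-1+w) * u m - R m) > 0" using cpos by (intro mult_pos_pos) auto
    from DERIV_pos_inc_right[OF der[OF that(1,2)] this] obtain d where d: "d > 0"
      "\<And>h. h > 0 \<Longrightarrow> h < d \<Longrightarrow> G p g B w N (xi(m := xi m + 0)) < G p g B w N (xi(m := xi m + (0 + h)))"
      by blast
    define h where "h = min (d/2) ((B - Sx xi N)/2)"
    have h: "h > 0" "h < d" "h \<le> B - Sx xi N" using d(1) that(3) unfolding h_def by (auto simp: min_def)
    have "feasible_N B N (xi(m := xi m + h))"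
      unfolding feas_Sx Sx_upd[OF that(1)] using nn h that by auto
    from max_G[OF a(1,2,6,7) this] d(2)[OF h(1,2)] show False by simp
  qed
  have opt2: "p*q^(m-1+w) * u m \<ge> R m" if "1 \<le> m" "m \<le> N" "0 < xi m" for m
  proof (rule ccontr)
    assume "\<not> ?thesis"
    then have "g/(2*ln 2) * (p*q^(m-1+w) * u m - R m) < 0" using cpos by (intro mult_pos_neg) auto
    from DERIV_neg_dec_left[OF der[OF that(1,2)] this] obtain d where d: "d > 0"
      "\<And>h. h > 0 \<Longrightarrow> h < d \<Longrightarrow> G p g B w N (xi(m := xi m + 0)) < G p g B w N (xi(m := xi m + (0 - h)))"
      by blast
    define h where "h = min (d/2) (xi m)"
    have h: "h > 0" "h < d" "h \<le> xi m" using d(1) that(3) unfolding h_def by auto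
    have "feasible_N B N (xi(m := xi m + (0 - h)))"
      unfolding feas_Sx Sx_upd[OF that(1)] using nn h that sb by auto
    from max_G[OF a(1,2,6,7) this] d(2)[OF h(1,2)] show False by simp
  qed
  have Sle: "Sx xi k \<le> B" if "k \<le> N" for k using Sx_mono[OF nn that] sb by simp
  have vpos: "0 < v k" "v k \<le> 1" if "k \<le> N" for k
  proof -
    have "0 \<le> g*((B - Sx xi k)/real w)" using Sle[OF that] a w0 by simp
    then show "0 < v k" "v k \<le> 1" unfolding v_def by auto
  qed
  have tel: "(\<Sum>i<N-1. if m \<le> i+1 then p^2*q^(i+w) else 0) + p*q^(N-1+w) = p*q^(m-1+w)"
    if "1 \<le> m" "m \<le> N" for m
    using telesc[OF a(1,2) that(1), of "N-1" w] that unfolding q_def by simp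
  have sumle: "(\<Sum>i<N-1. if m \<le> i+1 then p^2*q^(i+w) * v (i+1) else 0)
      \<le> (\<Sum>i<N-1. if m \<le> i+1 then p^2*q^(i+w) else 0)" for m
  proof (rule sum_mono)
    fix i assume "i \<in> {..<N-1}"
    then have "v (i+1) \<le> 1" using vpos(2)[of "i+1"] by simp
    moreover have "0 \<le> p^2*q^(i+w)" using q0 by simp
    ultimately show "(if m \<le> i+1 then p^2*q^(i+w) * v (i+1) else 0) \<le> (if m \<le> i+1 then p^2*q^(i+w) else 0)"
      by (simp add: mult_left_le)
  qed
  have pq: "0 < p*q^k" for k using a q0 by simp
  have ule: "u m \<le> 1" "0 < u m" if "1 \<le> m" "m \<le> N" for m
  proof -
    have "0 \<le> g * xi m" using nn that a by simp
    then show "u m \<le> 1" "0 < u m" unfolding u_def by auto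
  qed
  have ult: "u m < 1" if "1 \<le> m" "m \<le> N" "0 < xi m" for m
  proof -
    have "0 < g * xi m" using that a by simp
    then show ?thesis unfolding u_def by auto
  qed
  have SN: "Sx xi N < B"
  proof (rule ccontr)
    assume "\<not> ?thesis"
    then have SB: "Sx xi N = B" using sb by simp
    define P where "P = {j\<in>{1..N}. 0 < xi j}"
    have Pne: "P \<noteq> {}"
    proof
      assume "P = {}"
      then have "\<forall>j\<in>{1..N}. xi j = 0" using nn unfolding P_def by force
      then have "Sx xi N = 0" unfolding Sx_def by simp
      then show False using SB a by simp
    qed
    have Pf: "finite P" unfolding P_def by simp
    define m where "m = Max P"
    have mP: "m \<in> P" unfolding m_def using Pne Pf by simp
    then have m: "1 \<le> m" "m \<le> N" "0 < xi m" unfolding P_def by auto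
    have zero: "xi j = 0" if "m < j" "j \<le> N" for j
    proof -
      have "j \<notin> P" using that Max_ge[OF Pf, of j] unfolding m_def by auto
      moreover have j1: "j \<in> {1..N}" using that m by simp
      ultimately have "\<not> 0 < xi j" unfolding P_def by simp
      moreover have "0 \<le> xi j" using nn j1 by simp
      ultimately show ?thesis by simp
    qed
    have Sk: "Sx xi k = B" if "m \<le> k" "k \<le> N" for k
    proof -
      have "{1..N} = {1..k} \<union> {k+1..N}" using that by auto
      then have "Sx xi N = Sx xi k + (\<Sum>j=k+1..N. xi j)"
        unfolding Sx_def by (simp add: sum.union_disjoint)
      also have "(\<Sum>j=k+1..N. xi j) = 0" using zero that by (intro sum.neutral) auto
      finally show ?thesis using SB by simp
    qed
    have v1: "v k = 1" if "m \<le> k" "k \<le> N" for k unfolding v_def Sk[OF that] by simp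
    have "R m = (\<Sum>i<N-1. if m \<le> i+1 then p^2*q^(i+w) else 0) + p*q^(N-1+w)"
      unfolding R_def using v1 m by (auto intro!: sum.cong)
    also have "\<dots> = p*q^(m-1+w)" using tel m by simp
    finally have "R m = p*q^(m-1+w)" .
    moreover have "p*q^(m-1+w) * u m < p*q^(m-1+w)" using mult_strict_left_mono[OF ult[OF m] pq[of "m-1+w"]] by simp
    ultimately show False using opt2[OF m] by simp
  qed
  have Rlt: "R m < p*q^(m-1+w)" if "1 \<le> m" "m \<le> N" for m
  proof -
    have "v N < 1"
    proof -
      have "0 < g*((B - Sx xi N)/real w)" using SN a w0 by simp
      then show ?thesis unfolding v_def by simp
    qed
    then have "p*q^(N-1+w) * v N < p*q^(N-1+w)" using mult_strict_left_mono[OF _ pq[of "N-1+w"]] by fastforce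
    then show ?thesis unfolding R_def using sumle[of m] tel[OF that] by linarith
  qed
  have pos: "0 < xi m" if "1 \<le> m" "m \<le> N" for m
  proof (rule ccontr)
    assume "\<not> ?thesis"
    then have "xi m = 0" using nn that by force
    then have "u m = 1" unfolding u_def by simp
    then show False using opt1[OF that SN] Rlt[OF that] by simp
  qed
  have E: "p*q^(m-1+w) * u m = R m" if "1 \<le> m" "m \<le> N" for m
    using opt1[OF that SN] opt2[OF that pos[OF that]] by simp
  have Rrec: "R m = p^2*q^(m-1+w) * v m + R (m+1)" if "1 \<le> m" "m < N" for m
  proof -
    have "(\<Sum>i<N-1. if m \<le> i+1 then p^2*q^(i+w) * v (i+1) else 0)
      = (\<Sum>i<N-1. (if i = m-1 then p^2*q^(i+w) * v (i+1) else 0) + (if m+1 \<le> i+1 then p^2*q^(i+w) * v (i+1) else 0))"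
      using that by (intro sum.cong) auto
    also have "\<dots> = p^2*q^(m-1+w) * v m + (\<Sum>i<N-1. if m+1 \<le> i+1 then p^2*q^(i+w) * v (i+1) else 0)"
      using that by (simp add: sum.distrib)
    finally show ?thesis unfolding R_def by simp
  qed
  have RN: "R N = p*q^(N-1+w) * v N"
  proof -
    have "(\<Sum>i<N-1. if N \<le> i+1 then p^2*q^(i+w) * v (i+1) else 0) = 0"
      by (intro sum.neutral) auto
    then show ?thesis unfolding R_def by simp
  qed
  have uN: "u N = v N"
  proof -
    have "p*q^(N-1+w) * u N = p*q^(N-1+w) * v N" using E[OF a(6) order.refl] RN by simp
    then show ?thesis using a(1) q0 by simp
  qed
  have urec: "u m = p * v m + q * u (m+1)" if "1 \<le> m" "m < N" for m
  proof -
    have e1: "p*q^(m-1+w) * u m = p^2*q^(m-1+w) * v m + p*q^(m+w) * u (m+1)"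
      using E[OF that(1)] E[of "m+1"] Rrec[OF that] that by simp
    have qq: "q^(m+w) = q * q^(m-1+w)" using that(1) by (cases m) auto
    define K where "K = q^(m-1+w)"
    have e2: "p*K * u m = p^2*K * v m + p*(q*K) * u (m+1)" using e1 qq unfolding K_def by simp
    have "p*K * u m = p*K * (p * v m + q * u (m+1))"
      unfolding e2 by (simp add: power2_eq_square algebra_simps)
    moreover have "p*K \<noteq> 0" using pq[of "m-1+w"] unfolding K_def by linarith
    ultimately show ?thesis by simp
  qed
  have vinc: "v m < v (m+1)" if "1 \<le> m" "m < N" for m
  proof -
    have "Sx xi (m+1) = Sx xi m + xi (m+1)" unfolding Sx_def by simp
    moreover have "0 < xi (m+1)" using pos that by simp
    ultimately have lt: "Sx xi m < Sx xi (m+1)" by simp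
    have "0 \<le> g*((B - Sx xi (m+1))/real w)" using Sle[of "m+1"] that a w0 by simp
    moreover have "g*((B - Sx xi (m+1))/real w) < g*((B - Sx xi m)/real w)"
      using lt a w0 by (simp add: divide_strict_right_mono)
    ultimately show ?thesis unfolding v_def by (simp add: divide_strict_left_mono)
  qed
  have uv: "v m \<le> u m" if "1 \<le> m" "m \<le> N" for m
    using that(2,1)
  proof (induction m rule: inc_induct)
    case base then show ?case using uN by simp
  next
    case (step n)
    have "v n < v (n+1)" using vinc step by simp
    then have "0 \<le> q * (v (n+1) - v n)" using q0 by simp
    then have "v n \<le> p * v n + q * v (n+1)" unfolding q_def by (simp add: algebra_simps)
    also have "\<dots> \<le> p * v n + q * u (n+1)" using step q0 by simp
    finally show ?case using urec[of n] step by simp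
  qed
  have uinc: "u m < u (m+1)" if "1 \<le> m" "m < N" for m
  proof -
    have "v m < u (m+1)" using vinc[OF that] uv[of "m+1"] that by simp
    then have "p * v m + q * u (m+1) < p * u (m+1) + q * u(m+1)" using a by simp
    also have "\<dots> = u (m+1)" unfolding q_def by (simp add: algebra_simps)
    finally show ?thesis using urec[OF that] by simp
  qed
  have dec: "xi (m+1) < xi m" if "1 \<le> m" "m < N" for m
  proof -
    have "0 < xi m" "0 < xi (m+1)" using pos that by auto
    then have "0 < g * xi m" "0 < g * xi (m+1)" using a by auto
    then have "0 < 1 + g * xi m" "0 < 1 + g * xi (m+1)" by linarith+
    moreover have "1/(1+g*xi m) < 1/(1+g*xi (m+1))" using uinc[OF that] unfolding u_def .
    ultimately have "1 + g * xi (m+1) < 1 + g * xi m" by (simp add: field_simps)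
    then have "g * xi (m+1) < g * xi m" by simp
    then show ?thesis using a by simp
  qed
  show ?thesis using pos dec by auto
qed

end
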